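(* For $h\in\mathbb N$ and $0\le m<h$ let $c(m;h)=\frac{\#\{0\le x<h: x^2\equiv m\bmod h\}}{h}$. Then the sequence of squares $(\ell^2)_{\ell\ge1}$ distributes regularly within residue classes, i.e. $\lim_{L\to\infty}\frac1L\#\{\ell\le L:\ell^2\equiv m\bmod h\}=c(m;h)$ for all $h,m$ and $c(m;h_1h_2)=c(m;h_1)c(m;h_2)$ for coprime $h_1,h_2$. Moreover, for every $k\ge2$ and every $k$-DFA $(Q,\{0,\dots,k-1\},\delta,q_0)$ admitting a synchronizing word, $$\lim_{\lambda\to\infty}\sum_{0\le m<k^\lambda,\ m\notin S_\lambda}c(m;k^\lambda)=0.$$
   Context: A word $w$ over $\{0,\dots,k-1\}$ is synchronizing for the DFA if $\delta(q,w)=\delta(q',w)$ for all states $q,q'$ ($\delta$ extended to words letter by letter). $S$ is the set of $n\ge0$ whose base-$k$ expansion $(n)_k$ (most significant digit first, $(0)_k$ empty) is synchronizing, and $S_\lambda=S\cap[0,k^\lambda-1]$. *)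

theory Defs
  imports Complex_Main
begin

text \<open>Base-k expansion, most significant digit first; the expansion of 0 is empty.
  (For k < 2 we return [] by convention; only k >= 2 is used.)\<close>
function base_digits :: "nat \<Rightarrow> nat \<Rightarrow> nat list" where
  "base_digits k n = (if n = 0 \<or> k < 2 then [] else base_digits k (n div k) @ [n mod k])"
  by auto
termination by (relation "measure snd") auto

definition delta_star :: "('q \<Rightarrow> nat \<Rightarrow> 'q) \<Rightarrow> 'q \<Rightarrow> nat list \<Rightarrow> 'q" where
  "delta_star \<delta> q w = foldl \<delta> q w"

text \<open>A word over the alphabet {0,...,k-1} is synchronizing for the DFA with transition
  function delta (state set = the finite type 'q).\<close>
definition synchronizing :: "nat \<Rightarrow> ('q \<Rightarrow> nat \<Rightarrow> 'q) \<Rightarrow> nat list \<Rightarrow> bool" where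
  "synchronizing k \<delta> w \<longleftrightarrow> set w \<subseteq> {..<k} \<and> (\<forall>q q'. delta_star \<delta> q w = delta_star \<delta> q' w)"

definition S_lam :: "nat \<Rightarrow> ('q \<Rightarrow> nat \<Rightarrow> 'q) \<Rightarrow> nat \<Rightarrow> nat set" where
  "S_lam k \<delta> lam = {n. n < k ^ lam \<and> synchronizing k \<delta> (base_digits k n)}"

definition c_sq :: "nat \<Rightarrow> nat \<Rightarrow> real" where
  "c_sq m h = real (card {x. x < h \<and> x ^ 2 mod h = m mod h}) / real h"

end

theory Submission
  imports Defs "HOL-Number_Theory.Cong" "HOL-Computational_Algebra.Primes"
begin


lemma block_card:
  fixes K L :: nat
  assumes "K > 0"
  shows "card {x. x < K*L \<and> P x} = (\<Sum>a<K. card {b. b < L \<and> P (a + K*b)})"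
proof -
  have eq: "{x. x < K*L \<and> P x} = (\<Union>a\<in>{..<K}. (\<lambda>b. a + K*b) ` {b. b < L \<and> P (a + K*b)})"
  proof (rule set_eqI, rule iffI)
    fix x assume x: "x \<in> {x. x < K*L \<and> P x}"
    have "x = x mod K + K * (x div K)" by simp
    moreover have "x div K < L" using x assms by (simp add: less_mult_imp_div_less mult.commute)
    ultimately show "x \<in> (\<Union>a\<in>{..<K}. (\<lambda>b. a + K*b) ` {b. b < L \<and> P (a + K*b)})"
      using x assms by (auto intro!: bexI[of _ "x mod K"] image_eqI[of _ _ "x div K"])
  next
    fix x assume "x \<in> (\<Union>a\<in>{..<K}. (\<lambda>b. a + K*b) ` {b. b < L \<and> P (a + K*b)})"
    then obtain a b where ab: "a < K" "b < L" "P (a + K*b)" "x = a + K*b" by auto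
    have "a + K*b < K + K*b" using ab by simp
    also have "\<dots> = K * (b+1)" by simp
    also have "\<dots> \<le> K * L" using ab by (intro mult_left_mono) auto
    finally show "x \<in> {x. x < K*L \<and> P x}" using ab by simp
  qed
  have "card (\<Union>a\<in>{..<K}. (\<lambda>b. a + K*b) ` {b. b < L \<and> P (a + K*b)})
      = (\<Sum>a<K. card ((\<lambda>b. a + K*b) ` {b. b < L \<and> P (a + K*b)}))"
  proof (rule card_UN_disjoint)
    show "\<forall>i\<in>{..<K}. \<forall>j\<in>{..<K}. i \<noteq> j \<longrightarrow> (\<lambda>b. i + K*b) ` {b. b < L \<and> P (i + K*b)} \<inter> (\<lambda>b. j + K*b) ` {b. b < L \<and> P (j + K*b)} = {}"
    proof (intro ballI impI)
      fix i j assume "i \<in> {..<K}" "j \<in> {..<K}" "i \<noteq> j"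
      then show "(\<lambda>b. i + K*b) ` {b. b < L \<and> P (i + K*b)} \<inter> (\<lambda>b. j + K*b) ` {b. b < L \<and> P (j + K*b)} = {}"
        by auto (metis lessThan_iff mod_mult_self2 mod_less)
    qed
  qed auto
  also have "\<dots> = (\<Sum>a<K. card {b. b < L \<and> P (a + K*b)})"
    using assms by (intro sum.cong refl card_image) (auto simp: inj_on_def)
  finally show ?thesis using eq by simp
qed

lemma periodic_card:
  fixes h q :: nat
  assumes "h > 0" and per: "\<And>a j. P (a + h*j) = P a"
  shows "card {x. x < h*q \<and> P x} = q * card {a. a < h \<and> P a}"
proof -
  have "card {x. x < h*q \<and> P x} = (\<Sum>a<h. card {b. b < q \<and> P (a + h*b)})"
    using block_card[OF assms(1)] by blast
  also have "\<dots> = (\<Sum>a<h. if P a then q else 0)"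
    by (intro sum.cong refl) (auto simp: per)
  also have "\<dots> = q * card ({..<h} \<inter> {a. P a})"
    by (simp add: sum.If_cases)
  also have "{..<h} \<inter> {a. P a} = {a. a < h \<and> P a}" by auto
  finally show ?thesis .
qed

lemma sq_periodic:
  fixes h a j m :: nat
  shows "((a + h*j)^2 mod h = m mod h) = (a^2 mod h = m mod h)"
proof -
  have "[a + h*j = a] (mod h)" by (simp add: cong_def)
  then have "[(a + h*j)^2 = a^2] (mod h)" by (rule cong_pow)
  then show ?thesis by (simp add: cong_def)
qed

lemma count_bounds:
  fixes h L :: nat
  assumes "h > 0" and per: "\<And>a j. P (a + h*j) = P a"
  defines "C \<equiv> card {a. a < h \<and> P a}"
  shows "h * card {l \<in> {1..L}. P l} \<le> L*C + h*(h+1)"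
    and "L*C \<le> h * card {l \<in> {1..L}. P l} + h*(h+1)"
proof -
  define n where "n = L + 1"
  define q where "q = n div h"
  define cnt where "cnt = card {l \<in> {1..L}. P l}"
  have Ch: "C \<le> h" unfolding C_def by (rule order_trans[OF card_mono[of "{..<h}"]]) auto
  have qh1: "q*h \<le> n" unfolding q_def by (simp add: div_times_less_eq_dividend)
  have qh2: "n < q*h + h" unfolding q_def using assms(1)
    by (metis add.commute div_mult_mod_eq mod_less_divisor nat_add_left_cancel_less)
  have A: "card {x. x < h*q \<and> P x} = q*C" unfolding C_def by (rule periodic_card[OF assms(1) per])
  have s1: "{x. x < h*q \<and> P x} \<subseteq> {x. x < n \<and> P x}" using qh1 by (auto simp: mult.commute)
  have s2: "{x. x < n \<and> P x} \<subseteq> {x. x < h*q \<and> P x} \<union> {h*q..<n}" by auto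
  have s3: "{x. x < n \<and> P x} \<subseteq> insert 0 {l \<in> {1..L}. P l}" unfolding n_def by auto
  have s4: "{l \<in> {1..L}. P l} \<subseteq> {x. x < n \<and> P x}" unfolding n_def by auto
  have c1: "q*C \<le> card {x. x < n \<and> P x}" using card_mono[OF _ s1] A by simp
  have "card {x. x < n \<and> P x} \<le> card ({x. x < h*q \<and> P x} \<union> {h*q..<n})"
    by (rule card_mono[OF _ s2]) auto
  also have "\<dots> \<le> q*C + (n - h*q)" using card_Un_le[of "{x. x < h*q \<and> P x}" "{h*q..<n}"] A by simp
  finally have c2: "card {x. x < n \<and> P x} \<le> q*C + (n - h*q)" .
  have c3: "card {x. x < n \<and> P x} \<le> cnt + 1" unfolding cnt_def
    using card_mono[OF _ s3] by (simp add: card_insert_if split: if_splits)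
  have c4: "cnt \<le> card {x. x < n \<and> P x}" unfolding cnt_def by (rule card_mono[OF _ s4]) auto
  have "h*cnt \<le> h*(q*C + (n - h*q))" using c2 c4 by simp
  also have "\<dots> = (q*h)*C + h*(n - h*q)" by (simp add: algebra_simps)
  also have "\<dots> \<le> n*C + h*h" using qh1 qh2
    by (intro add_mono mult_right_mono mult_left_mono) (auto simp: mult.commute)
  also have "\<dots> \<le> L*C + h*(h+1)" using Ch unfolding n_def by (simp add: algebra_simps)
  finally show "h * card {l \<in> {1..L}. P l} \<le> L*C + h*(h+1)" unfolding cnt_def .
  have "L*C \<le> n*C" unfolding n_def by simp
  also have "\<dots> \<le> (q*h + h)*C" using qh2 by (intro mult_right_mono) auto
  also have "\<dots> = h*(q*C) + h*C" by (simp add: algebra_simps)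
  also have "\<dots> \<le> h*(cnt+1) + h*h" using c1 c3 Ch by (intro add_mono mult_left_mono) auto
  also have "\<dots> = h*cnt + h*(h+1)" by (simp add: algebra_simps)
  finally show "L*C \<le> h * card {l \<in> {1..L}. P l} + h*(h+1)" unfolding cnt_def .
qed

lemma part1:
  fixes h m :: nat
  assumes "0 < h"
  shows "(\<lambda>L. real (card {l \<in> {1..L}. l ^ 2 mod h = m mod h}) / real L) \<longlonglongrightarrow> c_sq m h"
proof -
  define P where "P = (\<lambda>l::nat. l ^ 2 mod h = m mod h)"
  define C where "C = card {a. a < h \<and> P a}"
  have per: "\<And>a j. P (a + h*j) = P a" unfolding P_def by (rule sq_periodic)
  have cs: "c_sq m h = real C / real h" unfolding c_sq_def C_def P_def by simp
  define cnt where "cnt = (\<lambda>L. card {l \<in> {1..L}. P l})"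
  have up: "real (cnt L) / real L \<le> real C / real h + real (h+1) / real L" if "L > 0" for L
  proof -
    have "h * cnt L \<le> L*C + h*(h+1)" using count_bounds(1)[OF assms per, of L] unfolding C_def cnt_def .
    then have "real h * real (cnt L) \<le> real L * real C + real h * real (h+1)" by (metis of_nat_add of_nat_le_iff of_nat_mult)
    then show ?thesis using that assms by (simp add: field_simps)
  qed
  have lo: "real C / real h - real (h+1) / real L \<le> real (cnt L) / real L" if "L > 0" for L
  proof -
    have "L*C \<le> h * cnt L + h*(h+1)" using count_bounds(2)[OF assms per, of L] unfolding C_def cnt_def .
    then have "real L * real C \<le> real h * real (cnt L) + real h * real (h+1)" by (metis of_nat_add of_nat_le_iff of_nat_mult)
    then have "real L * (real L * real C) \<le> real L * (real h * real (cnt L) + real h * real (h+1))"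
      by (rule mult_left_mono) auto
    then show ?thesis using that assms by (simp add: field_simps)
  qed
  have t1: "(\<lambda>L. real C / real h - real (h+1) / real L) \<longlonglongrightarrow> real C / real h"
    using tendsto_diff[OF tendsto_const lim_const_over_n[of "real (h+1)"]] by simp
  have t2: "(\<lambda>L. real C / real h + real (h+1) / real L) \<longlonglongrightarrow> real C / real h"
    using tendsto_add[OF tendsto_const lim_const_over_n[of "real (h+1)"]] by simp
  have ev: "eventually (\<lambda>L. L > (0::nat)) sequentially" by (rule eventually_gt_at_top)
  have "(\<lambda>L. real (cnt L) / real L) \<longlonglongrightarrow> real C / real h"
    by (rule tendsto_sandwich[OF eventually_mono[OF ev lo] eventually_mono[OF ev up] t1 t2]) auto
  then show ?thesis unfolding cs cnt_def P_def .
qed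

lemma part2:
  fixes h1 h2 m :: nat
  assumes "0 < h1" "0 < h2" "coprime h1 h2"
  shows "c_sq m (h1 * h2) = c_sq m h1 * c_sq m h2"
proof -
  define f where "f = (\<lambda>x::nat. (x mod h1, x mod h2))"
  define Q where "Q = (\<lambda>h x::nat. x^2 mod h = m mod h)"
  have eqv: "Q (h1*h2) x = (Q h1 x \<and> Q h2 x)" for x
  proof
    assume "Q (h1*h2) x"
    then have "[x^2 = m] (mod h1*h2)" unfolding Q_def cong_def .
    then have "[x^2 = m] (mod h1)" "[x^2 = m] (mod h2)"
      using cong_dvd_modulus_nat dvd_triv_left dvd_triv_right by blast+
    then show "Q h1 x \<and> Q h2 x" unfolding Q_def cong_def by simp
  next
    assume "Q h1 x \<and> Q h2 x"
    then have "[x^2 = m] (mod h1)" "[x^2 = m] (mod h2)" unfolding Q_def cong_def by auto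
    then have "[x^2 = m] (mod h1*h2)" using coprime_cong_mult_nat assms(3) by blast
    then show "Q (h1*h2) x" unfolding Q_def cong_def .
  qed
  have inj: "inj_on f {..<h1*h2}"
  proof (rule inj_onI)
    fix x y assume xy: "x \<in> {..<h1*h2}" "y \<in> {..<h1*h2}" "f x = f y"
    then have "[x = y] (mod h1)" "[x = y] (mod h2)" unfolding f_def cong_def by auto
    then have "[x = y] (mod h1*h2)" using coprime_cong_mult_nat assms(3) by blast
    then show "x = y" using xy by (simp add: cong_def)
  qed
  have img: "f ` {..<h1*h2} = {..<h1} \<times> {..<h2}"
  proof (rule card_subset_eq)
    show "f ` {..<h1*h2} \<subseteq> {..<h1} \<times> {..<h2}" unfolding f_def using assms by auto
    show "card (f ` {..<h1*h2}) = card ({..<h1} \<times> {..<h2})"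
      using card_image[OF inj] by (simp add: card_cartesian_product)
  qed auto
  have Qm: "Q h (x mod h) = Q h x" for h x unfolding Q_def by (simp add: power_mod)
  have imgA: "f ` {x. x < h1*h2 \<and> Q (h1*h2) x} = {x. x < h1 \<and> Q h1 x} \<times> {x. x < h2 \<and> Q h2 x}"
  proof
    show "f ` {x. x < h1*h2 \<and> Q (h1*h2) x} \<subseteq> {x. x < h1 \<and> Q h1 x} \<times> {x. x < h2 \<and> Q h2 x}"
      unfolding f_def using assms eqv Qm by auto
  next
    show "{x. x < h1 \<and> Q h1 x} \<times> {x. x < h2 \<and> Q h2 x} \<subseteq> f ` {x. x < h1*h2 \<and> Q (h1*h2) x}"
    proof
      fix p assume p: "p \<in> {x. x < h1 \<and> Q h1 x} \<times> {x. x < h2 \<and> Q h2 x}"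
      then have "p \<in> f ` {..<h1*h2}" using img by auto
      then obtain x where x: "x < h1*h2" "p = f x" by auto
      then have "Q (h1*h2) x" using p eqv Qm unfolding f_def by auto
      then show "p \<in> f ` {x. x < h1*h2 \<and> Q (h1*h2) x}" using x by auto
    qed
  qed
  have "card {x. x < h1*h2 \<and> Q (h1*h2) x} = card {x. x < h1 \<and> Q h1 x} * card {x. x < h2 \<and> Q h2 x}"
  proof -
    have "card {x. x < h1*h2 \<and> Q (h1*h2) x} = card (f ` {x. x < h1*h2 \<and> Q (h1*h2) x})"
      by (rule card_image[symmetric], rule inj_on_subset[OF inj]) auto
    then show ?thesis using imgA by (simp add: card_cartesian_product)
  qed
  then show ?thesis unfolding c_sq_def Q_def by simp
qed



declare base_digits.simps[simp del]

lemma bd0[simp]: "base_digits k 0 = []"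
  by (simp add: base_digits.simps)

lemma bd_rec: "n \<noteq> 0 \<Longrightarrow> 2 \<le> k \<Longrightarrow> base_digits k n = base_digits k (n div k) @ [n mod k]"
  by (simp add: base_digits.simps)

lemma bd_set: "2 \<le> k \<Longrightarrow> set (base_digits k n) \<subseteq> {..<k}"
proof (induction k n rule: base_digits.induct)
  case (1 k n)
  show ?case
  proof (cases "n = 0")
    case True then show ?thesis by simp
  next
    case False
    then show ?thesis using 1 bd_rec[OF False "1.prems"] by auto
  qed
qed

lemma bd_div1: "2 \<le> k \<Longrightarrow> \<exists>v. base_digits k n = base_digits k (n div k) @ v"
  by (cases "n = 0") (auto simp: bd_rec)

lemma bd_pref: "2 \<le> k \<Longrightarrow> \<exists>v. base_digits k m = base_digits k (m div k^p) @ v"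
proof (induction p)
  case 0 then show ?case by simp
next
  case (Suc p)
  then obtain v where v: "base_digits k m = base_digits k (m div k^p) @ v" by blast
  obtain v' where v': "base_digits k (m div k^p) = base_digits k ((m div k^p) div k) @ v'"
    using bd_div1[OF Suc.prems] by blast
  have "(m div k^p) div k = m div k^Suc p" by (metis div_mult2_eq power_Suc2)
  then show ?case using v v' by auto
qed

lemma bd_suf: "2 \<le> k \<Longrightarrow> \<exists>u. base_digits k y = u @ base_digits k (y mod k^r)"
proof (induction r arbitrary: y)
  case 0 then show ?case by simp
next
  case (Suc r)
  define z where "z = y mod k^Suc r"
  have zd: "z div k = (y div k) mod k^r"
    unfolding z_def using Suc.prems by (simp add: mod_mult2_eq div_mult2_eq mult.commute)
  have zm: "z mod k = y mod k"
    unfolding z_def by (simp add: mod_mod_cancel)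
  show ?case
  proof (cases "z = 0")
    case True then show ?thesis unfolding z_def by auto
  next
    case False
    then have y0: "y \<noteq> 0" unfolding z_def by (metis mod_0)
    obtain u where u: "base_digits k (y div k) = u @ base_digits k ((y div k) mod k^r)"
      using Suc by blast
    have "base_digits k y = u @ base_digits k z"
      using bd_rec[OF y0 Suc.prems] bd_rec[OF False Suc.prems] u zd zm by simp
    then show ?thesis unfolding z_def by blast
  qed
qed

definition val :: "nat \<Rightarrow> nat list \<Rightarrow> nat" where
  "val k ds = foldl (\<lambda>acc d. acc*k + d) 0 ds"

lemma val_snoc: "val k (ds @ [d]) = val k ds * k + d"
  by (simp add: val_def)

lemma val_bd:
  assumes "2 \<le> k" "set ds \<subseteq> {..<k}"
  shows "base_digits k (val k (1 # ds)) = 1 # ds \<and> 0 < val k (1 # ds) \<and> val k (1 # ds) < k ^ length (1 # ds)"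
  using assms(2)
proof (induction ds rule: rev_induct)
  case Nil
  have "val k [1] = 1" by (simp add: val_def)
  moreover have "base_digits k 1 = [1]" using assms(1) bd_rec[of 1 k] by simp
  ultimately show ?case using assms by simp
next
  case (snoc d ds)
  have IH: "base_digits k (val k (1 # ds)) = 1 # ds" "0 < val k (1 # ds)" "val k (1 # ds) < k ^ length (1 # ds)"
    using snoc by auto
  have dk: "d < k" using snoc.prems by auto
  have e: "val k (1 # ds @ [d]) = val k (1 # ds) * k + d" using val_snoc[of k "1 # ds" d] by simp
  have nz: "val k (1 # ds @ [d]) \<noteq> 0" using e IH(2) assms(1) by simp
  have "base_digits k (val k (1 # ds @ [d])) = base_digits k (val k (1 # ds)) @ [d]"
    using bd_rec[OF nz assms(1)] e dk by simp
  moreover have "val k (1 # ds @ [d]) < k ^ length (1 # ds @ [d])"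
  proof -
    have "val k (1 # ds) * k + d < val k (1 # ds) * k + k" using dk by simp
    also have "\<dots> = (val k (1 # ds) + 1) * k" by simp
    also have "\<dots> \<le> k ^ length (1 # ds) * k" using IH(3) by (intro mult_right_mono) auto
    finally show ?thesis using e by (simp add: mult.commute)
  qed
  ultimately show ?case using IH nz by simp
qed

lemma window_sync:
  fixes \<delta> :: "'q \<Rightarrow> nat \<Rightarrow> 'q"
  assumes k: "2 \<le> k" and w: "synchronizing k \<delta> w"
    and win: "(m div k^p) mod k^(length w + 1) = val k (1 # w)"
  shows "synchronizing k \<delta> (base_digits k m)"
proof -
  have ws: "set w \<subseteq> {..<k}" using w unfolding synchronizing_def by auto
  have vb: "base_digits k (val k (1 # w)) = 1 # w" using val_bd[OF k ws] by blast
  obtain v where v: "base_digits k m = base_digits k (m div k^p) @ v" using bd_pref[OF k] by blast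
  obtain u where u: "base_digits k (m div k^p) = u @ base_digits k ((m div k^p) mod k^(length w + 1))"
    using bd_suf[OF k] by blast
  have bm: "base_digits k m = (u @ [1]) @ w @ v" using u v win vb by simp
  have "delta_star \<delta> q (base_digits k m) = delta_star \<delta> q' (base_digits k m)" for q q'
  proof -
    have "delta_star \<delta> (delta_star \<delta> q (u @ [1])) w = delta_star \<delta> (delta_star \<delta> q' (u @ [1])) w"
      using w unfolding synchronizing_def by blast
    then show ?thesis unfolding bm delta_star_def by simp
  qed
  then show ?thesis unfolding synchronizing_def using bd_set[OF k] by blast
qed

lemma mod_shift_bij:
  fixes L h :: nat
  assumes "L > 0"
  shows "bij_betw (\<lambda>u. (h + u) mod L) {..<L} {..<L}"
proof -
  have inj: "inj_on (\<lambda>u. (h + u) mod L) {..<L}"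
  proof (rule inj_onI)
    fix x y assume "x \<in> {..<L}" "y \<in> {..<L}" "(h + x) mod L = (h + y) mod L"
    then have "[h + x = h + y] (mod L)" by (simp add: cong_def)
    then have "[x = y] (mod L)" by (simp add: cong_add_lcancel_nat)
    then show "x = y" using \<open>x \<in> {..<L}\<close> \<open>y \<in> {..<L}\<close> by (simp add: cong_def)
  qed
  have "(\<lambda>u. (h + u) mod L) ` {..<L} = {..<L}"
    by (rule card_subset_eq) (use assms card_image[OF inj] in auto)
  then show ?thesis using inj by (simp add: bij_betw_def)
qed

lemma shift_count:
  fixes e L K c g b0 :: nat
  assumes e: "e > 0" and L: "L > 0" and K: "K = e * L" and b0: "[g * b0 = e] (mod K)"
  shows "card {b. b < K \<and> Q ((c + g*b) mod K div e)} = e * card {v. v < L \<and> Q v}"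
proof -
  define T where "T = (\<lambda>b. (c + g*b) mod K)"
  define S where "S = (\<lambda>b u. of_bool (Q (T ((b + u*b0) mod K) div e)) :: nat)"
  have K0: "K > 0" using e L K by simp
  have shiftT: "T ((b + u*b0) mod K) div e = (T b div e + u) mod L" for b u
  proof -
    have "[c + g*((b + u*b0) mod K) = c + g*b + u*(g*b0)] (mod K)"
    proof -
      have "[(b + u*b0) mod K = b + u*b0] (mod K)" by (simp add: cong_def)
      then have "[c + g*((b + u*b0) mod K) = c + g*(b + u*b0)] (mod K)"
        by (intro cong_add cong_mult) auto
      then show ?thesis by (simp add: algebra_simps)
    qed
    also have "[c + g*b + u*(g*b0) = c + g*b + u*e] (mod K)"
      by (intro cong_add cong_mult b0) auto
    also have "[c + g*b + u*e = T b + u*e] (mod K)"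
      unfolding T_def by (intro cong_add) (auto simp: cong_def)
    finally have "T ((b + u*b0) mod K) = (T b + u*e) mod K" unfolding T_def cong_def by simp
    also have "\<dots> div e = ((T b + u*e) div e) mod L"
      unfolding K by (simp add: mod_mult2_eq e)
    also have "(T b + u*e) div e = T b div e + u" using e by simp
    finally show ?thesis .
  qed
  have TL: "T b div e < L" for b
  proof -
    have "T b < e * L" unfolding T_def K using K0 K by simp
    then show ?thesis by (simp add: less_mult_imp_div_less mult.commute)
  qed
  have row: "(\<Sum>u<L. S b u) = card {v. v < L \<and> Q v}" for b
  proof -
    have "(\<Sum>u<L. S b u) = (\<Sum>u<L. (\<lambda>v. of_bool (Q v) :: nat) ((T b div e + u) mod L))"
      unfolding S_def shiftT ..
    also have "\<dots> = (\<Sum>v<L. of_bool (Q v) :: nat)"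
      by (rule sum.reindex_bij_betw[OF mod_shift_bij[OF L]])
    also have "\<dots> = card {v. v < L \<and> Q v}" by (simp add: Int_def)
    finally show ?thesis .
  qed
  have col: "(\<Sum>b<K. S b u) = card {b. b < K \<and> Q (T b div e)}" for u
  proof -
    have "(\<Sum>b<K. S b u) = (\<Sum>b<K. (\<lambda>b. of_bool (Q (T b div e)) :: nat) ((u*b0 + b) mod K))"
      unfolding S_def by (simp add: add.commute)
    also have "\<dots> = (\<Sum>b<K. of_bool (Q (T b div e)) :: nat)"
      by (rule sum.reindex_bij_betw[OF mod_shift_bij[OF K0]])
    also have "\<dots> = card {b. b < K \<and> Q (T b div e)}" by (simp add: Int_def)
    finally show ?thesis .
  qed
  have "K * card {v. v < L \<and> Q v} = (\<Sum>b<K. \<Sum>u<L. S b u)" using row by simp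
  also have "\<dots> = (\<Sum>u<L. \<Sum>b<K. S b u)" by (rule sum.swap)
  also have "\<dots> = L * card {b. b < K \<and> Q (T b div e)}" using col by simp
  finally have "L * (e * card {v. v < L \<and> Q v}) = L * card {b. b < K \<and> Q (T b div e)}"
    unfolding K by (simp add: algebra_simps)
  then show ?thesis using L unfolding T_def by simp
qed

lemma avoid_count:
  fixes k r V e :: nat
  assumes "k \<ge> 2" "r > 0" "V < k^r"
  shows "card {v. v < k^(r*n0) * k^e \<and> (\<forall>i<n0. (v div k^(r*i)) mod k^r \<noteq> V)} = (k^r - 1)^n0 * k^e"
proof (induction n0)
  case 0 then show ?case by simp
next
  case (Suc n)
  define K where "K = k^r"
  define L where "L = k^(r*n) * k^e"
  define Pn where "Pn = (\<lambda>v. \<forall>i<n. (v div k^(r*i)) mod k^r \<noteq> V)"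
  have K0: "K > 0" unfolding K_def using assms by simp
  have split: "(\<forall>i<Suc n. ((a + K*b) div k^(r*i)) mod k^r \<noteq> V) = (a \<noteq> V \<and> Pn b)" if "a < K" for a b
  proof -
    have d0: "((a + K*b) div k^(r*0)) mod k^r = a" using that unfolding K_def by simp
    have dS: "((a + K*b) div k^(r*Suc i)) mod k^r = (b div k^(r*i)) mod k^r" for i
    proof -
      have "k^(r*Suc i) = K * k^(r*i)" unfolding K_def by (simp add: power_add)
      then have "(a + K*b) div k^(r*Suc i) = ((a + K*b) div K) div k^(r*i)" by (simp add: div_mult2_eq)
      also have "(a + K*b) div K = b" using that K0 by simp
      finally show ?thesis by simp
    qed
    show ?thesis unfolding Pn_def
      by (metis (no_types, lifting) d0 dS less_Suc_eq_0_disj Suc_less_eq zero_less_Suc)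
  qed
  have "k^(r*Suc n) * k^e = K * L" unfolding K_def L_def by (simp add: power_add mult.assoc)
  then have "card {v. v < k^(r*Suc n) * k^e \<and> (\<forall>i<Suc n. (v div k^(r*i)) mod k^r \<noteq> V)}
      = (\<Sum>a<K. card {b. b < L \<and> (\<forall>i<Suc n. ((a + K*b) div k^(r*i)) mod k^r \<noteq> V)})"
    using block_card[OF K0] by simp
  also have "\<dots> = (\<Sum>a<K. if a = V then 0 else card {b. b < L \<and> Pn b})"
    by (intro sum.cong refl) (auto simp: split)
  also have "\<dots> = (K - 1) * card {b. b < L \<and> Pn b}"
  proof -
    have "{x. x < K \<and> x \<noteq> V} = {..<K} - {V}" by auto
    then have "card {x. x < K \<and> x \<noteq> V} = K - 1" using assms(3) unfolding K_def by simp
    then show ?thesis by (simp add: sum.If_cases Int_def)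
  qed
  also have "card {b. b < L \<and> Pn b} = (k^r - 1)^n * k^e" using Suc unfolding L_def Pn_def .
  finally show ?case unfolding K_def by simp
qed

lemma gcd_good:
  fixes k a s M :: nat
  assumes k: "k \<ge> 2" and nd: "\<forall>q. prime q \<and> q dvd k \<longrightarrow> \<not> q^s dvd a"
  shows "gcd (2*a) (k^M) dvd k^s"
proof -
  obtain q0 where "prime q0" "q0 dvd k" using prime_factor_nat[of k] k by auto
  then have a0: "a \<noteq> 0" using nd by (metis dvd_0_right)
  have g0: "gcd (2*a) (k^M) \<noteq> 0" using a0 by simp
  show ?thesis
  proof (rule multiplicity_le_imp_dvd[OF g0])
    fix q :: nat assume q: "prime q"
    show "multiplicity q (gcd (2*a) (k^M)) \<le> multiplicity q (k^s)"
    proof (cases "q dvd k")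
      case False
      then have "\<not> q dvd gcd (2*a) (k^M)"
        using q prime_dvd_power_nat by (meson dvd_trans gcd_dvd2)
      then show ?thesis by (simp add: not_dvd_imp_multiplicity_0)
    next
      case True
      have m1: "multiplicity q (gcd (2*a) (k^M)) \<le> multiplicity q (2*a)"
        by (rule dvd_imp_multiplicity_le) (use a0 in auto)
      have m2: "multiplicity q (2*a) = multiplicity q 2 + multiplicity q a"
        by (rule prime_elem_multiplicity_mult_distrib) (use q a0 in auto)
      have m3: "multiplicity q (2::nat) < 2"
      proof (rule multiplicity_lessI)
        have "q \<ge> 2" using q prime_ge_2_nat by blast
        then have "q^2 \<ge> 2^2" by (rule power_mono) auto
        then show "\<not> q^2 dvd (2::nat)" by (auto dest: dvd_imp_le)
      qed (use q in \<open>auto dest: prime_gt_1_nat\<close>)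
      have m4: "multiplicity q a < s"
        by (rule multiplicity_lessI) (use nd q True a0 in \<open>auto dest: prime_gt_1_nat\<close>)
      have "multiplicity q (gcd (2*a) (k^M)) \<le> s" using m1 m2 m3 m4 by linarith
      also have "s \<le> s * multiplicity q k"
      proof -
        have "multiplicity q k \<ge> 1" using True k q by (intro multiplicity_geI) (auto dest: prime_gt_1_nat)
        then show ?thesis by simp
      qed
      also have "\<dots> = multiplicity q (k^s)"
        by (rule prime_elem_multiplicity_power_distrib[symmetric]) (use q k in auto)
      finally show ?thesis by simp
    qed
  qed
qed

lemma mult_count:
  fixes n d :: nat
  assumes "d > 0" "d dvd n"
  shows "card {a. a < n \<and> d dvd a} \<le> n div d"
proof -
  have "{a. a < n \<and> d dvd a} \<subseteq> (\<lambda>j. d*j) ` {..<n div d}"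
  proof
    fix a assume "a \<in> {a. a < n \<and> d dvd a}"
    then obtain j where j: "a = d*j" "d*j < n" by auto
    have "d*j < d*(n div d)" using j assms by simp
    then have "j < n div d" by simp
    then show "a \<in> (\<lambda>j. d*j) ` {..<n div d}" using j by auto
  qed
  then have "card {a. a < n \<and> d dvd a} \<le> card ((\<lambda>j. d*j) ` {..<n div d})" by (rule card_mono[rotated]) auto
  also have "\<dots> \<le> n div d" using card_image_le[of "{..<n div d}" "\<lambda>j. d*j"] by simp
  finally show ?thesis .
qed

lemma abad_card:
  fixes k s t :: nat
  assumes k: "k \<ge> 2" and st: "s \<le> t"
  shows "card {a. a < k^t \<and> (\<exists>q. prime q \<and> q dvd k \<and> q^s dvd a)} * 2^s \<le> (k+1) * k^t"
proof -
  define Qs where "Qs = {q. q \<le> k \<and> prime q \<and> q dvd k}"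
  have fQ: "finite Qs" unfolding Qs_def by simp
  have cQ: "card Qs \<le> k + 1"
  proof -
    have "Qs \<subseteq> {..k}" unfolding Qs_def by auto
    then show ?thesis using card_mono[of "{..k}" Qs] by simp
  qed
  have sub: "{a. a < k^t \<and> (\<exists>q. prime q \<and> q dvd k \<and> q^s dvd a)} \<subseteq> (\<Union>q\<in>Qs. {a. a < k^t \<and> q^s dvd a})"
    unfolding Qs_def using k by (auto, metis dvd_imp_le not_numeral_le_zero zero_less_iff_neq_zero)
  have "card {a. a < k^t \<and> (\<exists>q. prime q \<and> q dvd k \<and> q^s dvd a)} \<le> card (\<Union>q\<in>Qs. {a. a < k^t \<and> q^s dvd a})"
    by (rule card_mono[OF _ sub]) (use fQ in auto)
  also have "\<dots> \<le> (\<Sum>q\<in>Qs. card {a. a < k^t \<and> q^s dvd a})" by (rule card_UN_le[OF fQ])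
  finally have c0: "card {a. a < k^t \<and> (\<exists>q. prime q \<and> q dvd k \<and> q^s dvd a)} * 2^s \<le> (\<Sum>q\<in>Qs. card {a. a < k^t \<and> q^s dvd a}) * 2^s"
    by (rule mult_right_mono) simp
  have c1: "card {a. a < k^t \<and> (\<exists>q. prime q \<and> q dvd k \<and> q^s dvd a)} * 2^s \<le> (\<Sum>q\<in>Qs. card {a. a < k^t \<and> q^s dvd a} * 2^s)"
    using c0 by (simp add: sum_distrib_right)
  have each: "card {a. a < k^t \<and> q^s dvd a} * 2^s \<le> k^t" if "q \<in> Qs" for q
  proof -
    have q: "prime q" "q dvd k" using that unfolding Qs_def by auto
    have q2: "q \<ge> 2" using q prime_ge_2_nat by blast
    have dv: "q^s dvd k^t"
      using q(2) st by (meson dvd_power_le order.refl)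
    have "card {a. a < k^t \<and> q^s dvd a} * 2^s \<le> (k^t div q^s) * 2^s"
      using mult_count[OF _ dv] q2 by (intro mult_right_mono) auto
    also have "\<dots> \<le> (k^t div q^s) * q^s" using q2 by (intro mult_left_mono power_mono) auto
    also have "\<dots> \<le> k^t" by (simp add: div_times_less_eq_dividend)
    finally show ?thesis .
  qed
  have "(\<Sum>q\<in>Qs. card {a. a < k^t \<and> q^s dvd a} * 2^s) \<le> (\<Sum>q\<in>Qs. k^t)" by (rule sum_mono) (rule each)
  also have "\<dots> = card Qs * k^t" by simp
  also have "\<dots> \<le> (k+1) * k^t" using cQ by (rule mult_right_mono) auto
  finally show ?thesis using c1 by linarith
qed



lemma sq_window:
  fixes k a b t M j :: nat
  assumes k: "k > 0" and Mt: "M \<le> t"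
  shows "((a + k^t*b)^2 mod (k^t*k^M)) div k^(t+j) = (((a^2 div k^t) + 2*a*b) mod k^M) div k^j"
proof -
  define A where "A = a^2 mod k^t"
  define c where "c = a^2 div k^t"
  define n where "n = (a + k^t*b)^2"
  have n: "n = A + k^t * (c + 2*a*b + k^t*b^2)"
  proof -
    have "a^2 = A + k^t*c" unfolding A_def c_def by simp
    then show ?thesis unfolding n_def by (simp add: power2_eq_square algebra_simps)
  qed
  have A: "A < k^t" unfolding A_def using k by simp
  have nd: "n div k^t = c + 2*a*b + k^t*b^2" using n A k by simp
  have nm: "n mod k^t = A" using n A k by simp
  have "n mod (k^t*k^M) = k^t * ((n div k^t) mod k^M) + A"
    using nm by (simp add: mod_mult2_eq)
  also have "(n div k^t) mod k^M = (c + 2*a*b) mod k^M"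
  proof -
    have "k^M dvd k^t" using Mt by (simp add: le_imp_power_dvd)
    then obtain z where z: "k^t = k^M * z" by blast
    have "n div k^t = (c + 2*a*b) + k^M*(z*b^2)" using nd z by (simp add: mult.assoc)
    then show ?thesis by simp
  qed
  finally have "n mod (k^t*k^M) = k^t * ((c + 2*a*b) mod k^M) + A" .
  then have "n mod (k^t*k^M) div k^t = (c + 2*a*b) mod k^M" using A k by simp
  then show ?thesis unfolding n_def c_def by (simp add: power_add div_mult2_eq)
qed

lemma sum_c_sq:
  fixes N :: nat and Ms :: "nat set"
  assumes "N > 0" "Ms \<subseteq> {..<N}"
  shows "(\<Sum>m\<in>Ms. c_sq m N) = real (card {x. x < N \<and> x^2 mod N \<in> Ms}) / real N"
proof -
  have fM: "finite Ms" using assms(2) finite_subset by blast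
  have "(\<Sum>m\<in>Ms. c_sq m N) = (\<Sum>m\<in>Ms. real (card {x. x < N \<and> x^2 mod N = m}) / real N)"
    unfolding c_sq_def by (intro sum.cong refl) (use assms(2) in auto)
  also have "\<dots> = real (\<Sum>m\<in>Ms. card {x. x < N \<and> x^2 mod N = m}) / real N"
    by (simp add: sum_divide_distrib)
  also have "(\<Sum>m\<in>Ms. card {x. x < N \<and> x^2 mod N = m}) = card (\<Union>m\<in>Ms. {x. x < N \<and> x^2 mod N = m})"
    by (rule card_UN_disjoint[symmetric]) (use fM in auto)
  also have "(\<Union>m\<in>Ms. {x. x < N \<and> x^2 mod N = m}) = {x. x < N \<and> x^2 mod N \<in> Ms}" by auto
  finally show ?thesis .
qed

lemma main_bound:
  fixes \<delta> :: "'q \<Rightarrow> nat \<Rightarrow> 'q"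
  assumes k: "2 \<le> k" and w: "synchronizing k \<delta> w" and sM: "s \<le> lam div 2"
  shows "(\<Sum>m \<in> {m. m < k ^ lam \<and> m \<notin> S_lam k \<delta> lam}. c_sq m (k ^ lam))
     \<le> real (k+1) / 2^s + ((real k ^ (length w + 1) - 1) / real k ^ (length w + 1)) ^ ((lam div 2 - s) div (length w + 1))"
proof -
  define r where "r = length w + 1"
  define M where "M = lam div 2"
  define t where "t = lam - M"
  define n0 where "n0 = (M - s) div r"
  define e' where "e' = (M - s) mod r"
  define V where "V = val k (1 # w)"
  define N where "N = k^lam"
  define Ms where "Ms = {m. m < k ^ lam \<and> m \<notin> S_lam k \<delta> lam}"
  have r0: "r > 0" unfolding r_def by simp
  have k0: "k > 0" using k by simp
  have Mt: "M \<le> t" "s \<le> t" "s \<le> M" unfolding M_def t_def using sM by auto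
  have N: "N = k^t * k^M" unfolding N_def t_def M_def by (simp add: power_add[symmetric])
  have ws: "set w \<subseteq> {..<k}" using w unfolding synchronizing_def by auto
  have Vr: "V < k^r" using val_bd[OF k ws] unfolding V_def r_def by simp
  have Msub: "M - s = r*n0 + e'" unfolding n0_def e'_def by simp
  define Q where "Q = (\<lambda>v::nat. \<forall>i<n0. (v div k^(r*i)) mod k^r \<noteq> V)"
  define Pw where "Pw = (\<lambda>x::nat. \<forall>i<n0. ((x^2 mod N) div k^(t+s+r*i)) mod k^r \<noteq> V)"
  define Abad where "Abad = {a. a < k^t \<and> (\<exists>q. prime q \<and> q dvd k \<and> q^s dvd a)}"
  define G where "G = (k^r - 1)^n0 * k^e'"
  have S1: "(\<Sum>m\<in>Ms. c_sq m N) = real (card {x. x < N \<and> x^2 mod N \<in> Ms}) / real N"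
    by (rule sum_c_sq) (auto simp: N_def Ms_def k0)
  have sub: "{x. x < N \<and> x^2 mod N \<in> Ms} \<subseteq> {x. x < k^t * k^M \<and> Pw x}"
  proof
    fix x assume x: "x \<in> {x. x < N \<and> x^2 mod N \<in> Ms}"
    have "Pw x"
      unfolding Pw_def
    proof (intro allI impI notI)
      fix i assume "i < n0" and eq: "((x^2 mod N) div k^(t+s+r*i)) mod k^r = V"
      have "synchronizing k \<delta> (base_digits k (x^2 mod N))"
        by (rule window_sync[OF k w]) (use eq in \<open>simp add: r_def V_def\<close>)
      moreover have "x^2 mod N < k^lam" unfolding N_def using k0 by simp
      ultimately have "x^2 mod N \<in> S_lam k \<delta> lam" unfolding S_lam_def by simp
      then show False using x unfolding Ms_def N_def by simp
    qed
    then show "x \<in> {x. x < k^t * k^M \<and> Pw x}" using x N by simp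
  qed
  have c1: "card {x. x < N \<and> x^2 mod N \<in> Ms} \<le> card {x. x < k^t * k^M \<and> Pw x}"
    by (rule card_mono[OF _ sub]) simp
  have c2: "card {x. x < k^t * k^M \<and> Pw x} = (\<Sum>a<k^t. card {b. b < k^M \<and> Pw (a + k^t*b)})"
    by (rule block_card) (simp add: k0)
  have PwQ: "Pw (a + k^t*b) = Q (((a^2 div k^t) + 2*a*b) mod k^M div k^s)" for a b
  proof -
    have "((a + k^t*b)^2 mod N) div k^(t+s+r*i) = (((a^2 div k^t) + 2*a*b) mod k^M div k^s) div k^(r*i)" for i
    proof -
      have "((a + k^t*b)^2 mod N) div k^(t+s+r*i) = (((a^2 div k^t) + 2*a*b) mod k^M) div k^(s+r*i)"
        unfolding N using sq_window[OF k0 Mt(1)] by (simp add: add.assoc)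
      also have "\<dots> = (((a^2 div k^t) + 2*a*b) mod k^M div k^s) div k^(r*i)"
        by (simp add: power_add div_mult2_eq)
      finally show ?thesis .
    qed
    then show ?thesis unfolding Pw_def Q_def by simp
  qed
  have cQ: "card {v. v < k^(M-s) \<and> Q v} = G"
  proof -
    have "k^(M-s) = k^(r*n0) * k^e'" unfolding Msub by (simp add: power_add)
    then show ?thesis unfolding Q_def G_def using avoid_count[OF k r0 Vr] by simp
  qed
  have each: "card {b. b < k^M \<and> Pw (a + k^t*b)} \<le> (if a \<in> Abad then k^M else k^s * G)" if a: "a < k^t" for a
  proof (cases "a \<in> Abad")
    case True
    have "card {b. b < k^M \<and> Pw (a + k^t*b)} \<le> card {..<k^M}" by (rule card_mono) auto
    then show ?thesis using True by simp
  next
    case False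
    then have nd: "\<forall>q. prime q \<and> q dvd k \<longrightarrow> \<not> q^s dvd a" using a unfolding Abad_def by auto
    obtain b0 where b0: "[(2*a) * b0 = k^s] (mod k^M)"
      using cong_solve_dvd_nat[OF gcd_good[OF k nd]] by blast
    have KM: "k^M = k^s * k^(M-s)" using Mt(3) by (simp add: power_add[symmetric])
    have "card {b. b < k^M \<and> Q (((a^2 div k^t) + (2*a)*b) mod k^M div k^s)} = k^s * card {v. v < k^(M-s) \<and> Q v}"
      by (rule shift_count[OF _ _ KM b0]) (use k0 in auto)
    then show ?thesis using False cQ by (simp add: PwQ mult.assoc)
  qed
  have c3: "(\<Sum>a<k^t. card {b. b < k^M \<and> Pw (a + k^t*b)}) \<le> (\<Sum>a<k^t. of_bool (a \<in> Abad) * k^M + k^s * G)"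
  proof (rule sum_mono)
    fix a assume "a \<in> {..<k^t}"
    then have "card {b. b < k^M \<and> Pw (a + k^t*b)} \<le> (if a \<in> Abad then k^M else k^s * G)" using each by simp
    then show "card {b. b < k^M \<and> Pw (a + k^t*b)} \<le> of_bool (a \<in> Abad) * k^M + k^s * G"
      by (auto split: if_splits)
  qed
  also have "\<dots> = card Abad * k^M + k^t * (k^s * G)"
  proof -
    have "(\<Sum>a<k^t. of_bool (a \<in> Abad) * k^M) = card ({..<k^t} \<inter> {a. a \<in> Abad}) * k^M"
      by (simp add: sum_distrib_right[symmetric])
    also have "{..<k^t} \<inter> {a. a \<in> Abad} = Abad" unfolding Abad_def by auto
    finally show ?thesis by (simp add: sum.distrib)
  qed
  finally have cW: "card {x. x < N \<and> x^2 mod N \<in> Ms} \<le> card Abad * k^M + k^t * (k^s * G)"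
    using c1 c2 by linarith
  have cA: "card Abad * 2^s \<le> (k+1) * k^t" unfolding Abad_def by (rule abad_card[OF k Mt(2)])
  have kt: "real k^t > 0" "real k^M > 0" using k0 by auto
  have "real (card {x. x < N \<and> x^2 mod N \<in> Ms}) / real N \<le> real (card Abad * k^M + k^t * (k^s * G)) / real N"
  proof (rule divide_right_mono)
    show "real (card {x. x < N \<and> x^2 mod N \<in> Ms}) \<le> real (card Abad * k^M + k^t * (k^s * G))"
      using cW by (simp only: of_nat_le_iff)
  qed simp
  also have "\<dots> = real (card Abad) / real k^t + real (k^s * G) / real k^M"
    using kt unfolding N by (simp add: field_simps)
  also have "real (card Abad) / real k^t \<le> real (k+1) / 2^s"
  proof -
    have "real (card Abad) * 2^s \<le> real (k+1) * real k^t" using cA by (metis of_nat_le_iff of_nat_mult of_nat_power of_nat_numeral)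
    then show ?thesis using kt by (simp add: field_simps)
  qed
  also have "real (k^s * G) / real k^M = ((real k ^ r - 1) / real k ^ r) ^ n0"
  proof -
    have kr: "real (k^r - 1) = real k ^ r - 1" using k0 by (simp add: of_nat_diff)
    have Meq: "M = s + (r*n0 + e')" using Mt(3) Msub by simp
    have "real k^M = real k^s * ((real k^r)^n0 * real k^e')"
      unfolding Meq by (simp add: power_add power_mult)
    moreover have "real (k^s * G) = real k^s * ((real k^r - 1)^n0 * real k^e')"
      unfolding G_def using kr by simp
    ultimately show ?thesis using k0 by (simp add: power_divide)
  qed
  finally show ?thesis using S1 unfolding r_def n0_def M_def Ms_def N_def by simp
qed

lemma part3:
  fixes \<delta> :: "'q \<Rightarrow> nat \<Rightarrow> 'q"
  assumes k: "2 \<le> k" and ex: "\<exists>w. synchronizing k \<delta> w"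
  shows "(\<lambda>lam. \<Sum>m \<in> {m. m < k ^ lam \<and> m \<notin> S_lam k \<delta> lam}. c_sq m (k ^ lam)) \<longlonglongrightarrow> 0"
proof (rule LIMSEQ_I)
  obtain w where w: "synchronizing k \<delta> w" using ex by blast
  define r where "r = length w + 1"
  define \<rho> where "\<rho> = (real k ^ r - 1) / real k ^ r"
  have kr: "real k ^ r \<ge> 1" using k by simp
  have \<rho>0: "0 \<le> \<rho>" "\<rho> < 1" unfolding \<rho>_def using kr by (auto simp: divide_less_eq)
  fix \<epsilon> :: real assume e: "0 < \<epsilon>"
  obtain s where s: "(1/2::real)^s < \<epsilon> / (2 * real (k+1))"
    using real_arch_pow_inv[of "\<epsilon> / (2 * real (k+1))" "1/2"] e by auto
  obtain N0 where N0: "\<rho>^N0 < \<epsilon>/2"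
    using real_arch_pow_inv[of "\<epsilon>/2" \<rho>] e \<rho>0 by auto
  show "\<exists>no. \<forall>n\<ge>no. norm ((\<Sum>m \<in> {m. m < k ^ n \<and> m \<notin> S_lam k \<delta> n}. c_sq m (k ^ n)) - 0) < \<epsilon>"
  proof (intro exI allI impI)
    fix n assume n: "n \<ge> 2*(s + r*N0)"
    define X where "X = (\<Sum>m \<in> {m. m < k ^ n \<and> m \<notin> S_lam k \<delta> n}. c_sq m (k ^ n))"
    have X0: "X \<ge> 0" unfolding X_def c_sq_def by (intro sum_nonneg) auto
    have nd: "s + r*N0 \<le> n div 2" using n by (metis div_le_mono nonzero_mult_div_cancel_left zero_neq_numeral)
    have sM: "s \<le> n div 2" using nd by simp
    have r0: "r > 0" unfolding r_def by simp
    have "r*N0 \<le> n div 2 - s" using nd by simp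
    then have "N0 \<le> (n div 2 - s) div r" using r0 by (metis div_le_mono nonzero_mult_div_cancel_left not_gr0)
    then have pw: "\<rho> ^ ((n div 2 - s) div r) \<le> \<rho>^N0" using \<rho>0 by (intro power_decreasing) auto
    have "X \<le> real (k+1) / 2^s + \<rho> ^ ((n div 2 - s) div r)"
      using main_bound[OF k w sM] unfolding X_def \<rho>_def r_def by simp
    also have "real (k+1) / 2^s = real (k+1) * (1/2)^s" by (simp add: power_one_over)
    also have "\<dots> < real (k+1) * (\<epsilon> / (2 * real (k+1)))" using s by (intro mult_strict_left_mono) auto
    also have "\<dots> = \<epsilon>/2" by (simp add: field_simps)
    finally have "X < \<epsilon>/2 + \<rho>^N0" using pw by linarith
    then have "X < \<epsilon>" using N0 by linarith
    then show "norm (X - 0) < \<epsilon>" using X0 by simp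
  qed
qed


theorem proposition8p2:
  shows "(\<forall>h m. 0 < h \<and> m < h \<longrightarrow>
            (\<lambda>L. real (card {l \<in> {1..L}. l ^ 2 mod h = m mod h}) / real L) \<longlonglongrightarrow> c_sq m h)
       \<and> (\<forall>h1 h2 m. 0 < h1 \<and> 0 < h2 \<and> coprime h1 h2 \<longrightarrow>
            c_sq m (h1 * h2) = c_sq m h1 * c_sq m h2)
       \<and> (\<forall>k (\<delta> :: 'q::finite \<Rightarrow> nat \<Rightarrow> 'q). 2 \<le> k \<and> (\<exists>w. synchronizing k \<delta> w) \<longrightarrow>
            (\<lambda>lam. \<Sum>m \<in> {m. m < k ^ lam \<and> m \<notin> S_lam k \<delta> lam}. c_sq m (k ^ lam)) \<longlonglongrightarrow> 0)"
  using part1 part2 part3 by blast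

end
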